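(* Let $g\in H(\mathbb{D})$, let $\nu$ be a weight satisfying property (U) and let $\mu$ be a weight. Then the following are equivalent: (1) $S_g: H^{\infty}_\nu\rightarrow \mathcal{B}^{\infty}_\mu$ is compact; (2) $\lim_{|z|\rightarrow1^-}\frac{\mu(z)}{(1-|z|^2)\nu(z)}|g(z)|=0$. If, in addition, $\nu$ and $\mu$ are typical weights, then (1) and (2) are also equivalent to (3) $S_g: H^{0}_\nu\rightarrow \mathcal{B}^{0}_\mu$ is compact.
   Context: $\mathbb{D}$ is the open unit disk and $H(\mathbb{D})$ the space of analytic functions on $\mathbb{D}$. A weight is a non-negative continuous function $\nu$ on $\mathbb{D}$ with $\nu(z)=\nu(|z|)$ for all $z$, which is decreasing in $|z|$. For a weight $\nu$: $H^{\infty}_\nu=\{f\in H(\mathbb{D}): \sup_{z}\nu(z)|f(z)|<\infty\}$, $H^{0}_\nu=\{f\in H(\mathbb{D}): \lim_{|z|\to1^-}\nu(z)|f(z)|=0\}$, $\mathcal{B}^{\infty}_\nu=\{f\in H(\mathbb{D}): |f(0)|+\sup_{z}\nu(z)|f'(z)|<\infty\}$, $\mathcal{B}^{0}_\nu=\{f\in H(\mathbb{D}): \lim_{|z|\to1^-}\nu(z)|f'(z)|=0\}$, each with its natural norm. A weight $\nu$ is typical if $\lim_{|z|\to1^-}\nu(z)=0$. A weight $\nu$ satisfies property (U) if there is $\alpha>0$ such that $r\mapsto \nu(r)/(1-r^2)^\alpha$ is almost increasing on $[0,1)$ (i.e. there is $C>0$ with $h(r)\le C h(s)$ whenever $r\le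 s$), equivalently $\inf_n \nu(1-2^{-(n+1)})/\nu(1-2^{-n})>0$. For $g\in H(\mathbb{D})$, $(S_gf)(z)=\int_0^z f'(\omega)g(\omega)\,d\omega$. *)

theory Defs
  imports "HOL-Complex_Analysis.Complex_Analysis"
begin

text \<open>A radial weight is represented by its profile nu on [0,1); nu(z) = nu(cmod z).\<close>
definition weight :: "(real \<Rightarrow> real) \<Rightarrow> bool" where
  "weight nu \<longleftrightarrow> continuous_on {0..<1} nu \<and> (\<forall>r\<in>{0..<1}. nu r \<ge> 0)
     \<and> (\<forall>r\<in>{0..<1}. \<forall>s\<in>{0..<1}. r \<le> s \<longrightarrow> nu s \<le> nu r)"

definition typical_weight :: "(real \<Rightarrow> real) \<Rightarrow> bool" where
  "typical_weight nu \<longleftrightarrow> (nu \<longlongrightarrow> 0) (at_left 1)"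

text \<open>Property (U); positivity of nu is implicit in the paper (the equivalent
  ratio formulation divides by nu).\<close>
definition property_U :: "(real \<Rightarrow> real) \<Rightarrow> bool" where
  "property_U nu \<longleftrightarrow> (\<forall>r\<in>{0..<1}. nu r > 0) \<and>
     (\<exists>\<alpha>>0. \<exists>C>0. \<forall>r\<in>{0..<1}. \<forall>s\<in>{0..<1}. r \<le> s \<longrightarrow>
        nu r / (1 - r\<^sup>2) powr \<alpha> \<le> C * (nu s / (1 - s\<^sup>2) powr \<alpha>))"

definition to_zero_at_boundary :: "(complex \<Rightarrow> real) \<Rightarrow> bool" where
  "to_zero_at_boundary F \<longleftrightarrow>
     (\<forall>e>0. \<exists>r<1. \<forall>z. r < cmod z \<and> cmod z < 1 \<longrightarrow> \<bar>F z\<bar> < e)"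

definition Hinf :: "(real \<Rightarrow> real) \<Rightarrow> (complex \<Rightarrow> complex) set" where
  "Hinf nu = {f. f holomorphic_on ball 0 1 \<and>
     bdd_above ((\<lambda>z. nu (cmod z) * cmod (f z)) ` ball 0 1)}"

definition H0 :: "(real \<Rightarrow> real) \<Rightarrow> (complex \<Rightarrow> complex) set" where
  "H0 nu = {f. f holomorphic_on ball 0 1 \<and>
     to_zero_at_boundary (\<lambda>z. nu (cmod z) * cmod (f z))}"

definition Hnorm :: "(real \<Rightarrow> real) \<Rightarrow> (complex \<Rightarrow> complex) \<Rightarrow> real" where
  "Hnorm nu f = (SUP z\<in>ball 0 1. nu (cmod z) * cmod (f z))"

definition Binf :: "(real \<Rightarrow> real) \<Rightarrow> (complex \<Rightarrow> complex) set" where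
  "Binf mu = {f. f holomorphic_on ball 0 1 \<and>
     bdd_above ((\<lambda>z. mu (cmod z) * cmod (deriv f z)) ` ball 0 1)}"

definition B0 :: "(real \<Rightarrow> real) \<Rightarrow> (complex \<Rightarrow> complex) set" where
  "B0 mu = {f. f holomorphic_on ball 0 1 \<and>
     to_zero_at_boundary (\<lambda>z. mu (cmod z) * cmod (deriv f z))}"

definition Bnorm :: "(real \<Rightarrow> real) \<Rightarrow> (complex \<Rightarrow> complex) \<Rightarrow> real" where
  "Bnorm mu f = cmod (f 0) + (SUP z\<in>ball 0 1. mu (cmod z) * cmod (deriv f z))"

definition Sg :: "(complex \<Rightarrow> complex) \<Rightarrow> (complex \<Rightarrow> complex) \<Rightarrow> complex \<Rightarrow> complex" where
  "Sg g f z = contour_integral (linepath 0 z) (\<lambda>w. deriv f w * g w)"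

definition compact_op ::
  "('a \<Rightarrow> 'b) \<Rightarrow> 'a set \<Rightarrow> ('a \<Rightarrow> real) \<Rightarrow> 'b set \<Rightarrow> ('b \<Rightarrow> real)
    \<Rightarrow> ('b \<Rightarrow> 'b \<Rightarrow> 'b) \<Rightarrow> bool" where
  "compact_op T X nX Y nY sub \<longleftrightarrow> (\<forall>f\<in>X. T f \<in> Y) \<and>
     (\<forall>fs :: nat \<Rightarrow> 'a. (\<forall>n. fs n \<in> X \<and> nX (fs n) \<le> 1) \<longrightarrow>
        (\<exists>r h. strict_mono r \<and> h \<in> Y \<and> (\<lambda>n. nY (sub (T (fs (r n))) h)) \<longlonglongrightarrow> 0))"

definition fsub :: "(complex \<Rightarrow> complex) \<Rightarrow> (complex \<Rightarrow> complex) \<Rightarrow> complex \<Rightarrow> complex" where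
  "fsub f h = (\<lambda>z. f z - h z)"

end

theory Submission
  imports Defs "HOL-Complex_Analysis.Complex_Analysis"
begin

lemma Sg_deriv:
  assumes F: "F holomorphic_on ball 0 1" and g: "g holomorphic_on ball 0 1" and z: "z \<in> ball (0::complex) 1"
  shows "(Sg g F has_field_derivative deriv F z * g z) (at z)"
proof -
  let ?phi = "\<lambda>w. deriv F w * g w"
  have hol: "?phi holomorphic_on ball 0 1"
    by (intro holomorphic_intros F g) auto
  have "((\<lambda>x. contour_integral (linepath 0 x) ?phi) has_field_derivative ?phi z) (at z within ball 0 1)"
  proof (rule triangle_contour_integrals_convex_primitive)
    show "continuous_on (ball 0 1) ?phi" using hol holomorphic_on_imp_continuous_on by blast
    fix b c assume b: "b \<in> ball (0::complex) 1" and c: "c \<in> ball (0::complex) 1"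
    have "(?phi has_contour_integral 0) (linepath 0 b +++ linepath b c +++ linepath c 0)"
    proof (rule Cauchy_theorem_convex_simple[OF hol])
      have "closed_segment 0 b \<subseteq> ball 0 1" "closed_segment b c \<subseteq> ball 0 1" "closed_segment c 0 \<subseteq> ball 0 1"
        using b c by (simp_all add: closed_segment_subset)
      then show "path_image (linepath 0 b +++ linepath b c +++ linepath c 0) \<subseteq> ball 0 1"
        by (simp add: path_image_join)
    qed auto
    then show "contour_integral (linepath 0 b) ?phi + contour_integral (linepath b c) ?phi +
                       contour_integral (linepath c 0) ?phi = 0"
      by (rule has_chain_integral_chain_integral3)
  qed (use z in auto)
  then show ?thesis unfolding Sg_def
    using at_within_open[OF z open_ball] by simp
qed


lemma weightD: assumes "weight nu" "0 \<le> r" "r \<le> s" "s < 1"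
  shows "nu s \<le> nu r" "0 \<le> nu s"
  using assms unfolding weight_def by auto

lemma propU_pos: "property_U nu \<Longrightarrow> 0 \<le> r \<Longrightarrow> r < 1 \<Longrightarrow> 0 < nu r"
  unfolding property_U_def by auto

lemma nu_lower:
  assumes w: "weight nu" and U: "property_U nu"
  obtains L where "L > 0" "\<And>r s. 0 \<le> r \<Longrightarrow> r < 1 \<Longrightarrow> s = (1 + r) / 2 \<Longrightarrow> nu r \<le> L * nu s"
proof -
  obtain \<alpha> C where a: "\<alpha> > 0" and C: "C > 0" and UC: "\<forall>r\<in>{0..<1}. \<forall>s\<in>{0..<1}. r \<le> s \<longrightarrow>
        nu r / (1 - r\<^sup>2) powr \<alpha> \<le> C * (nu s / (1 - s\<^sup>2) powr \<alpha>)"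
    using U unfolding property_U_def by blast
  have "nu r \<le> (C * 2 powr \<alpha>) * nu s" if r: "0 \<le> r" "r < 1" and s: "s = (1 + r) / 2" for r s
  proof -
    have s1: "0 \<le> s" "s < 1" "r \<le> s" using r s by auto
    have pr: "0 < 1 - r\<^sup>2" using r by (simp add: abs_square_less_1)
    have ps: "0 < 1 - s\<^sup>2" using s1 by (simp add: abs_square_less_1)
    have "nu r / (1 - r\<^sup>2) powr \<alpha> \<le> C * (nu s / (1 - s\<^sup>2) powr \<alpha>)"
      using UC r s1 by auto
    hence 1: "nu r * (1 - s\<^sup>2) powr \<alpha> \<le> C * nu s * (1 - r\<^sup>2) powr \<alpha>"
      using pr ps by (simp add: field_simps)
    have "1 - s\<^sup>2 \<ge> (1 - r\<^sup>2) / 2"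
    proof -
      have "1 - s\<^sup>2 = ((1 - r) / 2) * (1 + s)" using s by (simp add: power2_eq_square field_simps)
      also have "\<dots> \<ge> ((1 - r)/2) * (1 + r)" using s1 r by (intro mult_left_mono) auto
      finally show ?thesis by (simp add: power2_eq_square field_simps)
    qed
    hence "(1 - s\<^sup>2) powr \<alpha> \<ge> ((1 - r\<^sup>2) / 2) powr \<alpha>"
      using pr a by (intro powr_mono2) auto
    also have "((1 - r\<^sup>2) / 2) powr \<alpha> = (1 - r\<^sup>2) powr \<alpha> / 2 powr \<alpha>"
      using pr by (simp add: powr_divide)
    finally have "nu r * ((1 - r\<^sup>2) powr \<alpha> / 2 powr \<alpha>) \<le> C * nu s * (1 - r\<^sup>2) powr \<alpha>"
      using 1 propU_pos[OF U r] by (meson mult_left_mono order_trans less_imp_le)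
    hence "nu r * (1 - r\<^sup>2) powr \<alpha> \<le> (C * 2 powr \<alpha> * nu s) * (1 - r\<^sup>2) powr \<alpha>"
      by (simp add: field_simps)
    then show ?thesis using pr by simp
  qed
  then show ?thesis using that[of "C * 2 powr \<alpha>"] C by auto
qed

lemma deriv_est:
  assumes w: "weight nu" and U: "property_U nu"
  obtains K where "K > 0" "\<And>f B z. f holomorphic_on ball 0 1 \<Longrightarrow> (\<forall>w\<in>ball 0 1. nu (cmod w) * cmod (f w) \<le> B)
     \<Longrightarrow> z \<in> ball 0 1 \<Longrightarrow> cmod (deriv f z) \<le> K * B / ((1 - (cmod z)\<^sup>2) * nu (cmod z))"
proof -
  obtain L where L: "L > 0" "\<And>r s. 0 \<le> r \<Longrightarrow> r < 1 \<Longrightarrow> s = (1 + r) / 2 \<Longrightarrow> nu r \<le> L * nu s"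
    using nu_lower[OF w U] by blast
  have "cmod (deriv f z) \<le> (4 * L) * B / ((1 - (cmod z)\<^sup>2) * nu (cmod z))"
    if f: "f holomorphic_on ball 0 1" and fb: "\<forall>w\<in>ball 0 1. nu (cmod w) * cmod (f w) \<le> B"
      and z: "z \<in> ball 0 1" for f B z
  proof -
    define r where "r = cmod z"
    define s where "s = (1 + r) / 2"
    define \<rho> where "\<rho> = (1 - r) / 2"
    have r: "0 \<le> r" "r < 1" using z by (auto simp: r_def)
    have nur: "0 < nu r" using propU_pos[OF U r] .
    have nus: "0 < nu s" using propU_pos[OF U, of s] r by (auto simp: s_def)
    have rho: "0 < \<rho>" using r by (simp add: \<rho>_def)
    have sub: "cball z \<rho> \<subseteq> ball 0 1"
    proof
      fix w assume "w \<in> cball z \<rho>"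
      hence "cmod w \<le> r + \<rho>" using norm_triangle_sub[of w z] by (auto simp: r_def dist_norm norm_minus_commute)
      hence "cmod w < 1" using r unfolding \<rho>_def by (simp add: field_simps)
      thus "w \<in> ball 0 1" by simp
    qed
    have bd: "cmod (f w) \<le> B * L / nu r" if wz: "cmod (z - w) = \<rho>" for w
    proof -
      have wb: "w \<in> ball 0 1" using sub wz by (auto simp: dist_norm)
      have "cmod w \<le> r + \<rho>" using norm_triangle_sub[of w z] wz by (auto simp: r_def norm_minus_commute)
      hence "cmod w \<le> s" by (simp add: s_def \<rho>_def field_simps)
      hence "nu s \<le> nu (cmod w)" using weightD(1)[OF w, of "cmod w" s] r by (simp add: s_def)
      have nuw: "0 < nu (cmod w)" using propU_pos[OF U, of "cmod w"] wb by simp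
      have "cmod (f w) \<le> B / nu (cmod w)" using fb wb nuw by (simp add: field_simps mult.commute)
      also have "\<dots> \<le> B / nu s"
        using \<open>nu s \<le> nu (cmod w)\<close> nus fb wb nuw
        by (metis divide_left_mono dual_order.trans mult_pos_pos norm_ge_zero zero_le_mult_iff less_imp_le mult_nonneg_nonneg)
      also have "\<dots> \<le> B * L / nu r"
      proof -
        have B0: "0 \<le> B" using fb wb nuw by (meson norm_ge_zero order_trans less_imp_le mult_nonneg_nonneg)
        have "nu r \<le> L * nu s" using L(2)[OF r s_def] .
        thus ?thesis using B0 nus nur by (simp add: field_simps mult_left_mono)
      qed
      finally show ?thesis .
    qed
    have "cmod ((deriv ^^ 1) f z) \<le> fact 1 * (B * L / nu r) / \<rho> ^ 1"
      by (rule Cauchy_inequality[OF holomorphic_on_subset[OF f] _ rho bd])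
         (use sub f in \<open>auto intro: holomorphic_on_imp_continuous_on continuous_on_subset\<close>)
    hence d: "cmod (deriv f z) \<le> 2 * B * L / (nu r * (1 - r))" by (simp add: \<rho>_def field_simps)
    have B0: "0 \<le> B * L / nu r"  using bd[of "z - \<rho>"] rho by (simp) (meson norm_ge_zero order_trans)
    have "2 * B * L / (nu r * (1 - r)) = 2 * (B * L / nu r) / (1 - r)" by simp
    also have "\<dots> \<le> 4 * (B * L / nu r) / (1 - r\<^sup>2)"
    proof -
      define X where "X = B * L / nu r"
      have X: "0 \<le> X" using B0 by (simp add: X_def)
      have eq: "1 - r\<^sup>2 = (1 - r) * (1 + r)" by (simp add: power2_eq_square algebra_simps)
      have "2 * X / (1 - r) = 2 * X * (1 + r) / (1 - r\<^sup>2)" proof -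
        have "1 - r \<noteq> 0" "1 + r \<noteq> 0" using r by auto
        hence "2 * X / (1 - r) = 2 * X * (1 + r) / ((1 - r) * (1 + r))" by simp
        thus ?thesis by (simp only: eq)
      qed
      also have "\<dots> \<le> 4 * X / (1 - r\<^sup>2)"
      proof -
        have "X * (1 + r) \<le> X * 2" using X r by (intro mult_left_mono) auto
        thus ?thesis using r eq by (intro divide_right_mono) (auto simp: power2_eq_square mult.commute)
      qed
      finally show ?thesis by (simp add: X_def)
    qed
    also have "\<dots> = (4 * L) * B / ((1 - r\<^sup>2) * nu r)" by (simp add: mult_ac)
    finally show ?thesis using d by (simp add: r_def)
  qed
  then show ?thesis using that[of "4 * L"] L by auto
qed


definition ratio :: "(real \<Rightarrow> real) \<Rightarrow> (real \<Rightarrow> real) \<Rightarrow> (complex \<Rightarrow> complex) \<Rightarrow> complex \<Rightarrow> real" where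
  "ratio nu mu g z = mu (cmod z) / ((1 - (cmod z)\<^sup>2) * nu (cmod z)) * cmod (g z)"

lemma bound_on_cball:
  assumes "g holomorphic_on ball 0 1" "r < 1"
  obtains G where "\<And>z. cmod z \<le> r \<Longrightarrow> cmod (g z) \<le> G"
proof -
  have sub: "cball 0 (max r 0) \<subseteq> ball (0::complex) 1" using assms(2) by auto
  have "compact (g ` cball 0 (max r 0))"
    by (rule compact_continuous_image)
       (use assms sub in \<open>auto intro: continuous_on_subset holomorphic_on_imp_continuous_on\<close>)
  then obtain G where "\<forall>x\<in>g ` cball 0 (max r 0). norm x \<le> G"
    using compact_imp_bounded bounded_iff by metis
  then show ?thesis using that[of G] by auto
qed

lemma ratio_nonneg:
  assumes "weight mu" "property_U nu" "z \<in> ball 0 1"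
  shows "0 \<le> ratio nu mu g z"
proof -
  have "0 \<le> mu (cmod z)" "0 < nu (cmod z)" "0 < 1 - (cmod z)\<^sup>2"
    using assms weightD[of mu 0 "cmod z"] propU_pos[of nu "cmod z"]
    by (auto simp: abs_square_less_1)
  thus ?thesis unfolding ratio_def by simp
qed

lemma ratio_bdd:
  assumes mu: "weight mu" and w: "weight nu" and U: "property_U nu" and g: "g holomorphic_on ball 0 1"
    and Z: "to_zero_at_boundary (ratio nu mu g)"
  obtains Rb where "\<And>z. z \<in> ball 0 1 \<Longrightarrow> ratio nu mu g z \<le> Rb"
proof -
  obtain r0 where r0: "r0 < 1" "\<And>z. r0 < cmod z \<and> cmod z < 1 \<Longrightarrow> \<bar>ratio nu mu g z\<bar> < 1"
    using Z unfolding to_zero_at_boundary_def by (meson zero_less_one)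
  define r1 where "r1 = max r0 0"
  have r1: "0 \<le> r1" "r1 < 1" using r0 by (auto simp: r1_def)
  obtain G where G: "\<And>z. cmod z \<le> r1 \<Longrightarrow> cmod (g z) \<le> G" using bound_on_cball[OF g r1(2)] by blast
  have G0: "0 \<le> G" using G[of 0] r1 by (smt (verit) norm_ge_zero norm_zero)
  have nur1: "0 < nu r1" using propU_pos[OF U r1] .
  have "ratio nu mu g z \<le> max 1 (mu 0 / ((1 - r1\<^sup>2) * nu r1) * G)" if z: "z \<in> ball 0 1" for z
  proof (cases "r1 < cmod z")
    case True
    then show ?thesis using r0(2)[of z] z by (auto simp: r1_def)
  next
    case False
    hence zr: "cmod z \<le> r1" by simp
    have m: "0 \<le> mu (cmod z)" "mu (cmod z) \<le> mu 0" using weightD[OF mu, of 0 "cmod z"] z by auto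
    have m0: "0 \<le> mu 0" using weightD[OF mu, of 0 0] by auto
    have n: "nu r1 \<le> nu (cmod z)" using weightD(1)[OF w, of "cmod z" r1] zr r1 by auto
    have q: "1 - r1\<^sup>2 \<le> 1 - (cmod z)\<^sup>2" using zr by (simp add: power_mono)
    have q0: "0 < 1 - r1\<^sup>2" using r1 by (simp add: abs_square_less_1)
    have d: "(1 - r1\<^sup>2) * nu r1 \<le> (1 - (cmod z)\<^sup>2) * nu (cmod z)"
      using q n q0 nur1 by (intro mult_mono) auto
    have "mu (cmod z) / ((1 - (cmod z)\<^sup>2) * nu (cmod z)) \<le> mu 0 / ((1 - r1\<^sup>2) * nu r1)"
      using m m0 d q0 nur1 by (intro frac_le) auto
    hence "ratio nu mu g z \<le> mu 0 / ((1 - r1\<^sup>2) * nu r1) * G"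
      unfolding ratio_def using G[OF zr] m0 q0 nur1 by (intro mult_mono) auto
    thus ?thesis by simp
  qed
  thus ?thesis using that by blast
qed


lemma Sg_hol:
  assumes F: "F holomorphic_on ball 0 1" and g: "g holomorphic_on ball 0 1"
  shows "Sg g F holomorphic_on ball 0 1"
    and "\<And>z. z \<in> ball 0 1 \<Longrightarrow> deriv (Sg g F) z = deriv F z * g z"
proof -
  show "Sg g F holomorphic_on ball 0 1"
    using Sg_deriv[OF F g] by (auto simp: holomorphic_on_open) blast
  show "\<And>z. z \<in> ball 0 1 \<Longrightarrow> deriv (Sg g F) z = deriv F z * g z"
    using Sg_deriv[OF F g] DERIV_imp_deriv by blast
qed

lemma Sg_est:
  assumes w: "weight nu" and U: "property_U nu" and mu: "weight mu" and g: "g holomorphic_on ball 0 1"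
  obtains K where "K > 0" "\<And>f B z. f holomorphic_on ball 0 1 \<Longrightarrow> (\<forall>w\<in>ball 0 1. nu (cmod w) * cmod (f w) \<le> B)
     \<Longrightarrow> z \<in> ball 0 1 \<Longrightarrow> mu (cmod z) * cmod (deriv (Sg g f) z) \<le> K * B * ratio nu mu g z"
proof -
  obtain K where K: "K > 0" "\<And>f B z. f holomorphic_on ball 0 1 \<Longrightarrow> (\<forall>w\<in>ball 0 1. nu (cmod w) * cmod (f w) \<le> B)
     \<Longrightarrow> z \<in> ball 0 1 \<Longrightarrow> cmod (deriv f z) \<le> K * B / ((1 - (cmod z)\<^sup>2) * nu (cmod z))"
    using deriv_est[OF w U] by blast
  have "mu (cmod z) * cmod (deriv (Sg g f) z) \<le> K * B * ratio nu mu g z"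
    if f: "f holomorphic_on ball 0 1" and fb: "\<forall>w\<in>ball 0 1. nu (cmod w) * cmod (f w) \<le> B"
      and z: "z \<in> ball 0 1" for f B z
  proof -
    have m: "0 \<le> mu (cmod z)" using weightD[OF mu, of 0 "cmod z"] z by auto
    have "mu (cmod z) * cmod (deriv (Sg g f) z) = mu (cmod z) * cmod (deriv f z) * cmod (g z)"
      using Sg_hol(2)[OF f g z] by (simp add: norm_mult)
    also have "\<dots> \<le> mu (cmod z) * (K * B / ((1 - (cmod z)\<^sup>2) * nu (cmod z))) * cmod (g z)"
      using K(2)[OF f fb z] m by (intro mult_right_mono mult_left_mono) auto
    also have "\<dots> = K * B * ratio nu mu g z" by (simp add: ratio_def)
    finally show ?thesis .
  qed
  thus ?thesis using that K(1) by blast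
qed

lemma Sg_in:
  assumes w: "weight nu" and U: "property_U nu" and mu: "weight mu" and g: "g holomorphic_on ball 0 1"
    and Z: "to_zero_at_boundary (ratio nu mu g)"
    and f: "f holomorphic_on ball 0 1" and fb: "\<forall>w\<in>ball 0 1. nu (cmod w) * cmod (f w) \<le> B"
  shows "Sg g f \<in> Binf mu" "Sg g f \<in> B0 mu"
proof -
  obtain K where K: "K > 0" "\<And>z. z \<in> ball 0 1 \<Longrightarrow> mu (cmod z) * cmod (deriv (Sg g f) z) \<le> K * B * ratio nu mu g z"
    using Sg_est[OF w U mu g] f fb by metis
  obtain Rb where Rb: "\<And>z. z \<in> ball 0 1 \<Longrightarrow> ratio nu mu g z \<le> Rb"
    using ratio_bdd[OF mu w U g Z] by blast
  have B0: "0 \<le> B" using fb[rule_format, of 0] propU_pos[OF U, of 0]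
    by (smt (verit) mem_ball_0 mult_nonneg_nonneg norm_ge_zero norm_zero zero_less_one)
  have hol: "Sg g f holomorphic_on ball 0 1" using Sg_hol[OF f g] by blast
  have "mu (cmod z) * cmod (deriv (Sg g f) z) \<le> K * B * Rb" if "z \<in> ball 0 1" for z
    using K(2)[OF that] Rb[OF that] K(1) B0 
    by (smt (verit) mult_left_mono mult_nonneg_nonneg)
  then show "Sg g f \<in> Binf mu" unfolding Binf_def using hol by (auto intro!: bdd_aboveI)
  show "Sg g f \<in> B0 mu" unfolding B0_def to_zero_at_boundary_def
  proof (intro CollectI conjI allI impI hol)
    fix e :: real assume e: "e > 0"
    obtain r where r: "r < 1" "\<And>z. r < cmod z \<and> cmod z < 1 \<Longrightarrow> \<bar>ratio nu mu g z\<bar> < e / (K * B + 1)"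
      using Z e K(1) B0 unfolding to_zero_at_boundary_def
      by (metis add_nonneg_pos divide_pos_pos mult_nonneg_nonneg less_imp_le zero_less_one)
    show "\<exists>r<1. \<forall>z. r < cmod z \<and> cmod z < 1 \<longrightarrow> \<bar>mu (cmod z) * cmod (deriv (Sg g f) z)\<bar> < e"
    proof (intro exI[of _ r] conjI allI impI r(1))
      fix z assume zz: "r < cmod z \<and> cmod z < 1"
      hence z: "z \<in> ball 0 1" by simp
      have m: "0 \<le> mu (cmod z)" using weightD[OF mu, of 0 "cmod z"] z by auto
      have rn: "0 \<le> ratio nu mu g z" using ratio_nonneg[OF mu U z] .
      have KB: "0 \<le> K * B" using K(1) B0 by simp
      have "K * B * ratio nu mu g z \<le> (K * B + 1) * ratio nu mu g z"
        using rn by (simp add: mult_right_mono)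
      also have "\<dots> < (K * B + 1) * (e / (K * B + 1))"
        using r(2)[OF zz] rn KB by (intro mult_strict_left_mono) auto
      also have "\<dots> = e" using KB by simp
      finally show "\<bar>mu (cmod z) * cmod (deriv (Sg g f) z)\<bar> < e"
        using K(2)[OF z] m by simp
    qed
  qed
qed


lemma compact_in_cball:
  assumes "compact K" "K \<subseteq> ball (0::complex) 1"
  obtains \<rho> where "0 \<le> \<rho>" "\<rho> < 1" "K \<subseteq> cball 0 \<rho>"
proof (cases "K = {}")
  case True thus ?thesis using that[of 0] by auto
next
  case False
  obtain x where x: "x \<in> K" "\<forall>y\<in>K. cmod y \<le> cmod x"
    using continuous_attains_sup[OF assms(1) False, of cmod] continuous_on_norm_id by blast
  have "cmod x < 1" "K \<subseteq> cball 0 (cmod x)" using x assms(2) by (auto simp: subset_iff)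
  thus ?thesis using that[of "cmod x"] by auto
qed

lemma deriv_fsub:
  assumes A: "A holomorphic_on ball 0 1" and B: "B holomorphic_on ball 0 1"
    and g: "g holomorphic_on ball 0 1" and z: "z \<in> ball 0 1"
  shows "deriv (fsub (Sg g A) (Sg g B)) z = deriv (Sg g (\<lambda>w. A w - B w)) z"
proof -
  have D: "(\<lambda>w. A w - B w) holomorphic_on ball 0 1" using A B by (intro holomorphic_intros)
  have dA: "A field_differentiable at z" "B field_differentiable at z"
    using A B z holomorphic_on_imp_differentiable_at by auto
  have "deriv (fsub (Sg g A) (Sg g B)) z = deriv (Sg g A) z - deriv (Sg g B) z"
    unfolding fsub_def
    using Sg_deriv[OF A g z] Sg_deriv[OF B g z]
    by (intro deriv_diff) (auto simp: field_differentiable_def)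
  also have "\<dots> = (deriv A z - deriv B z) * g z" using Sg_hol(2)[OF A g z] Sg_hol(2)[OF B g z]
    by (simp add: algebra_simps)
  also have "\<dots> = deriv (Sg g (\<lambda>w. A w - B w)) z" using Sg_hol(2)[OF D g z] dA by simp
  finally show ?thesis .
qed

lemma fsub_Sg_0: "fsub (Sg g A) (Sg g B) 0 = 0"
  by (simp add: fsub_def Sg_def)


lemma compact_seq:
  fixes fs :: "nat \<Rightarrow> complex \<Rightarrow> complex"
  assumes w: "weight nu" and U: "property_U nu" and mu: "weight mu" and g: "g holomorphic_on ball 0 1"
    and Z: "to_zero_at_boundary (ratio nu mu g)"
    and fsh: "\<And>n. fs n holomorphic_on ball 0 1"
    and fsb: "\<And>n. \<forall>z\<in>ball 0 1. nu (cmod z) * cmod (fs n z) \<le> 1"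
  obtains r f where "strict_mono r" "f holomorphic_on ball 0 1" "\<forall>z\<in>ball 0 1. nu (cmod z) * cmod (f z) \<le> 1"
    "(\<lambda>n. Bnorm mu (fsub (Sg g (fs (r n))) (Sg g f))) \<longlonglongrightarrow> 0"
proof -
  let ?H = "{h. h holomorphic_on ball 0 1 \<and> (\<forall>z\<in>ball 0 1. nu (cmod z) * cmod (h z) \<le> 1)}"
  obtain f r where fh: "f holomorphic_on ball 0 1" and r: "strict_mono (r :: nat \<Rightarrow> nat)"
    and pw: "\<And>x. x \<in> ball 0 1 \<Longrightarrow> ((\<lambda>n. fs (r n) x) \<longlongrightarrow> f x) sequentially"
    and ul: "\<And>K. \<lbrakk>compact K; K \<subseteq> ball 0 1\<rbrakk> \<Longrightarrow> uniform_limit K (fs \<circ> r) f sequentially"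
  proof (rule Montel[of "ball 0 1" ?H fs])
    show "\<And>h. h \<in> ?H \<Longrightarrow> h holomorphic_on ball 0 1" by auto
    show "range fs \<subseteq> ?H" using fsh fsb by auto
    fix K :: "complex set" assume K: "compact K" "K \<subseteq> ball 0 1"
    obtain \<rho> where \<rho>: "0 \<le> \<rho>" "\<rho> < 1" "K \<subseteq> cball 0 \<rho>" using compact_in_cball[OF K] by blast
    have nr: "0 < nu \<rho>" using propU_pos[OF U \<rho>(1,2)] .
    have "cmod (h z) \<le> 1 / nu \<rho>" if h: "h \<in> ?H" and z: "z \<in> K" for h z
    proof -
      have zb: "z \<in> ball 0 1" and zr: "cmod z \<le> \<rho>" using z K \<rho> by auto
      have "nu \<rho> \<le> nu (cmod z)" using weightD(1)[OF w, of "cmod z" \<rho>] zr \<rho> by auto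
      hence "nu \<rho> * cmod (h z) \<le> nu (cmod z) * cmod (h z)" by (simp add: mult_right_mono)
      also have "\<dots> \<le> 1" using h zb by auto
      finally show ?thesis using nr by (simp add: field_simps)
    qed
    thus "\<exists>B. \<forall>h\<in>?H. \<forall>z\<in>K. cmod (h z) \<le> B" by blast
  qed auto
  have fb: "\<forall>z\<in>ball 0 1. nu (cmod z) * cmod (f z) \<le> 1"
  proof
    fix z :: complex assume z: "z \<in> ball 0 1"
    have "(\<lambda>n. nu (cmod z) * cmod (fs (r n) z)) \<longlonglongrightarrow> nu (cmod z) * cmod (f z)"
      by (intro tendsto_intros pw z)
    thus "nu (cmod z) * cmod (f z) \<le> 1" by (rule LIMSEQ_le_const2) (use fsb z in auto)
  qed
  obtain K where K: "K > 0" "\<And>f B z. f holomorphic_on ball 0 1 \<Longrightarrow> (\<forall>w\<in>ball 0 1. nu (cmod w) * cmod (f w) \<le> B)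
     \<Longrightarrow> z \<in> ball 0 1 \<Longrightarrow> mu (cmod z) * cmod (deriv (Sg g f) z) \<le> K * B * ratio nu mu g z"
    using Sg_est[OF w U mu g] by blast
  define D where "D n = (\<lambda>w. fs (r n) w - f w)" for n
  have Dh: "D n holomorphic_on ball 0 1" for n unfolding D_def using fsh fh by (intro holomorphic_intros)
  have Db: "\<forall>w\<in>ball 0 1. nu (cmod w) * cmod (D n w) \<le> 2" for n
  proof
    fix w :: complex assume w': "w \<in> ball 0 1"
    have "nu (cmod w) * cmod (D n w) \<le> nu (cmod w) * cmod (fs (r n) w) + nu (cmod w) * cmod (f w)"
      unfolding D_def using propU_pos[OF U, of "cmod w"] w'
      by (simp add: distrib_left[symmetric] norm_triangle_ineq4 mult_left_mono)
    also have "\<dots> \<le> 2" using fsb[of "r n"] fb w' by fastforce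
    finally show "nu (cmod w) * cmod (D n w) \<le> 2" .
  qed
  have Bn: "Bnorm mu (fsub (Sg g (fs (r n))) (Sg g f)) = (SUP z\<in>ball 0 1. mu (cmod z) * cmod (deriv (Sg g (D n)) z))" for n
    unfolding Bnorm_def fsub_Sg_0 D_def using deriv_fsub[OF fsh fh g] by (auto intro!: SUP_cong)
  have "\<forall>\<^sub>F n in sequentially. \<bar>Bnorm mu (fsub (Sg g (fs (r n))) (Sg g f))\<bar> < e" if e: "e > 0" for e
  proof -
    obtain r0 where r0: "r0 < 1" "\<And>z. r0 < cmod z \<and> cmod z < 1 \<Longrightarrow> \<bar>ratio nu mu g z\<bar> < e / (4 * K + 1)"
      using Z e K(1) unfolding to_zero_at_boundary_def by (metis add_pos_pos divide_pos_pos mult_pos_pos zero_less_numeral zero_less_one)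
    define r1 where "r1 = max r0 0"
    have r1: "0 \<le> r1" "r1 < 1" using r0 by (auto simp: r1_def)
    obtain G where G: "\<And>z. cmod z \<le> r1 \<Longrightarrow> cmod (g z) \<le> G" using bound_on_cball[OF g r1(2)] by blast
    have G0: "0 \<le> G" using G[of 0] r1 by (smt (verit) norm_ge_zero norm_zero)
    define s0 where "s0 = (1 + r1) / 2"
    define \<rho>0 where "\<rho>0 = (1 - r1) / 2"
    have \<rho>0: "0 < \<rho>0" using r1 by (simp add: \<rho>0_def)
    have s0b: "cball 0 s0 \<subseteq> ball (0::complex) 1" using r1 by (auto simp: s0_def)
    define m0 where "m0 = mu 0"
    have m0: "0 \<le> m0" using weightD[OF mu, of 0 0] by (auto simp: m0_def)
    define \<delta> where "\<delta> = e * \<rho>0 / (2 * (m0 * G + 1))"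
    have \<delta>: "0 < \<delta>" using e \<rho>0 m0 G0 unfolding \<delta>_def by (intro divide_pos_pos mult_pos_pos) (auto simp: add_nonneg_pos)
    have ev: "\<forall>\<^sub>F n in sequentially. \<forall>x\<in>cball 0 s0. dist ((fs \<circ> r) n x) (f x) < \<delta>"
      using uniform_limitD[OF ul[OF compact_cball s0b] \<delta>] .
    show ?thesis using ev
    proof eventually_elim
      case (elim n)
      have pt: "mu (cmod z) * cmod (deriv (Sg g (D n)) z) \<le> e / 2" if z: "z \<in> ball 0 1" for z
      proof (cases "r1 < cmod z")
        case True
        have rr: "\<bar>ratio nu mu g z\<bar> < e / (4 * K + 1)" using r0(2)[of z] True z by (auto simp: r1_def)
        have rn: "0 \<le> ratio nu mu g z" using ratio_nonneg[OF mu U z] .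
        have "mu (cmod z) * cmod (deriv (Sg g (D n)) z) \<le> K * 2 * ratio nu mu g z"
          using K(2)[OF Dh Db z] .
        also have "\<dots> \<le> (4 * K + 1) * ratio nu mu g z / 2" using rn K(1) by (simp add: field_simps)
        also have "\<dots> \<le> (4 * K + 1) * (e / (4 * K + 1)) / 2" 
          using rr rn K(1) by (intro divide_right_mono mult_left_mono) auto
        also have "\<dots> = e / 2" using K(1) by simp
        finally show ?thesis .
      next
        case False
        hence zr: "cmod z \<le> r1" by simp
        have sub: "cball z \<rho>0 \<subseteq> cball 0 s0"
        proof
          fix w assume "w \<in> cball z \<rho>0"
          hence "cmod w \<le> cmod z + \<rho>0" using norm_triangle_sub[of w z] by (auto simp: dist_norm norm_minus_commute)
          thus "w \<in> cball 0 s0" using zr by (simp add: s0_def \<rho>0_def field_simps)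
        qed
        have bd: "cmod (D n w) \<le> \<delta>" if "cmod (z - w) = \<rho>0" for w
        proof -
          have "w \<in> cball 0 s0" using sub that by (auto simp: dist_norm)
          thus ?thesis using elim by (auto simp: D_def dist_norm intro: less_imp_le)
        qed
        have cz: "cball z \<rho>0 \<subseteq> ball 0 1" using sub s0b by blast
        have bz: "ball z \<rho>0 \<subseteq> ball 0 1" using cz ball_subset_cball by blast
        have "cmod ((deriv ^^ 1) (D n) z) \<le> fact 1 * \<delta> / \<rho>0 ^ 1"
          by (rule Cauchy_inequality[OF holomorphic_on_subset[OF Dh bz]
               continuous_on_subset[OF holomorphic_on_imp_continuous_on[OF Dh] cz] \<rho>0 bd])
        hence dD: "cmod (deriv (D n) z) \<le> \<delta> / \<rho>0" by simp
        have m: "0 \<le> mu (cmod z)" "mu (cmod z) \<le> m0" using weightD[OF mu, of 0 "cmod z"] z by (auto simp: m0_def)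
        have "mu (cmod z) * cmod (deriv (Sg g (D n)) z) = mu (cmod z) * cmod (deriv (D n) z) * cmod (g z)"
          using Sg_hol(2)[OF Dh g z] by (simp add: norm_mult)
        also have "\<dots> \<le> m0 * (\<delta> / \<rho>0) * G"
          using m dD G[OF zr] m0 \<delta> \<rho>0 by (intro mult_mono) auto
        also have "\<dots> = e / 2 * (m0 * G / (m0 * G + 1))"
        proof -
          have pos: "0 < m0 * G + 1" using m0 G0 by (simp add: add_nonneg_pos)
          have q: "\<delta> / \<rho>0 = e / (2 * (m0 * G + 1))" using \<rho>0 by (simp add: \<delta>_def)
          show ?thesis unfolding q using pos by (simp add: field_simps)
        qed
        also have "\<dots> \<le> e / 2 * 1" using e m0 G0 by (intro mult_left_mono) (auto simp: add_nonneg_pos)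
        finally show ?thesis by simp
      qed
      have bdd: "bdd_above ((\<lambda>z. mu (cmod z) * cmod (deriv (Sg g (D n)) z)) ` ball 0 1)"
        using pt by (intro bdd_aboveI[where M="e / 2"]) auto
      have le: "(SUP z\<in>ball 0 1. mu (cmod z) * cmod (deriv (Sg g (D n)) z)) \<le> e / 2"
        using pt by (intro cSUP_least) auto
      have ge: "0 \<le> (SUP z\<in>ball 0 1. mu (cmod z) * cmod (deriv (Sg g (D n)) z))"
      proof -
        have "0 \<le> mu (cmod 0) * cmod (deriv (Sg g (D n)) 0)" using weightD[OF mu, of 0 0] by simp
        also have "\<dots> \<le> (SUP z\<in>ball 0 1. mu (cmod z) * cmod (deriv (Sg g (D n)) z))"
          by (rule cSUP_upper[OF _ bdd]) simp
        finally show ?thesis .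
      qed
      show ?case unfolding Bn using le ge e by simp
    qed
  qed
  hence "(\<lambda>n. Bnorm mu (fsub (Sg g (fs (r n))) (Sg g f))) \<longlonglongrightarrow> 0"
    by (simp add: tendsto_iff dist_real_def)
  thus ?thesis using that r fh fb by blast
qed


lemma disc_ineqs:
  assumes a: "cmod a < 1" and z: "cmod z < 1"
  shows "1 - cmod a * cmod z \<le> cmod (1 - cnj a * z)"
    and "(1 - (cmod a)\<^sup>2) / 2 \<le> 1 - cmod a * cmod z"
    and "(1 - (cmod z)\<^sup>2) / 2 \<le> 1 - cmod a * cmod z"
    and "1 - cmod z \<le> 1 - cmod a * cmod z"
    and "0 < 1 - cmod a * cmod z"
    and "1 - cnj a * z \<noteq> 0"
proof -
  have n: "cmod (cnj a * z) = cmod a * cmod z" by (simp add: norm_mult)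
  show 1: "1 - cmod a * cmod z \<le> cmod (1 - cnj a * z)"
    using norm_triangle_ineq2[of 1 "cnj a * z"] n by simp
  have az: "cmod a * cmod z \<le> cmod a" "cmod a * cmod z \<le> cmod z"
    using a z by (auto intro: mult_left_le mult_left_le_one_le)
  show "(1 - (cmod a)\<^sup>2) / 2 \<le> 1 - cmod a * cmod z"
  proof -
    have "0 \<le> (1 - cmod a)\<^sup>2" by simp
    hence "2 * cmod a \<le> 1 + (cmod a)\<^sup>2" by (simp add: power2_eq_square algebra_simps)
    thus ?thesis using az by (simp add: field_simps)
  qed
  show "(1 - (cmod z)\<^sup>2) / 2 \<le> 1 - cmod a * cmod z"
  proof -
    have "0 \<le> (1 - cmod z)\<^sup>2" by simp
    hence "2 * cmod z \<le> 1 + (cmod z)\<^sup>2" by (simp add: power2_eq_square algebra_simps)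
    thus ?thesis using az by (simp add: field_simps)
  qed
  show "1 - cmod z \<le> 1 - cmod a * cmod z" using az by simp
  show 2: "0 < 1 - cmod a * cmod z" using az z by simp
  show "1 - cnj a * z \<noteq> 0" using 1 2 by auto
qed


definition tf :: "(real \<Rightarrow> real) \<Rightarrow> nat \<Rightarrow> real \<Rightarrow> complex \<Rightarrow> complex \<Rightarrow> complex" where
  "tf nu N M a z = complex_of_real ((1 - (cmod a)\<^sup>2) ^ N / (nu (cmod a) * M)) / (1 - cnj a * z) ^ N"

lemma tf_aux:
  fixes w c b :: complex assumes w: "w \<noteq> 0"
  shows "c * (of_nat N * (b * w ^ (N - Suc 0))) / (w ^ N * w ^ N) = c * of_nat N * b / (w * w ^ N)"
proof (cases N)
  case 0 then show ?thesis by simp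
next
  case (Suc m)
  have e: "w ^ N * w ^ N = w ^ m * (w * w ^ N)" unfolding Suc by (simp add: power_add[symmetric])
  have "c * (of_nat N * (b * w ^ (N - Suc 0))) / (w ^ N * w ^ N)
      = (c * of_nat N * b) * w ^ m / (w ^ m * (w * w ^ N))" unfolding e using Suc by (simp add: algebra_simps)
  also have "\<dots> = c * of_nat N * b / (w * w ^ N)" using w by simp
  finally show ?thesis .
qed

lemma gen_deriv:
  fixes c b z :: complex assumes nz: "1 - b * z \<noteq> 0"
  shows "((\<lambda>z. c / (1 - b * z) ^ N) has_field_derivative c * of_nat N * b / (1 - b * z) ^ Suc N) (at z)"
proof -
  have nz': "b * z \<noteq> 1" using nz by auto
  show ?thesis
    apply (rule derivative_eq_intros refl | simp add: nz nz')+
    by (rule tf_aux[OF nz])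
qed

lemma tf_deriv:
  assumes a: "cmod a < 1" and z: "cmod z < 1"
  shows "(tf nu N M a has_field_derivative
     complex_of_real ((1 - (cmod a)\<^sup>2) ^ N / (nu (cmod a) * M)) * of_nat N * cnj a / (1 - cnj a * z) ^ Suc N) (at z)"
proof -
  have nz: "1 - cnj a * z \<noteq> 0" using disc_ineqs[OF a z] by blast
  show ?thesis unfolding tf_def [abs_def] by (rule gen_deriv[OF nz])
qed


lemma key_bound:
  fixes t u d X Y C0 Cm M \<alpha> :: real
  assumes t: "0 < t" "t \<le> u" and d: "u / 2 \<le> d" and X: "0 \<le> X" "X \<le> C0 * Y * (u / t) powr \<alpha>"
    and Y: "0 < Y" and a: "\<alpha> \<le> real N" and C0: "0 < C0" "C0 \<le> Cm" and M: "M = 2 ^ N * Cm"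
  shows "X * (t ^ N / (Y * M)) / d ^ N \<le> 1"
proof -
  have u: "0 < u" using t by simp
  have ut: "1 \<le> u / t" using t by simp
  have "(u / t) powr \<alpha> \<le> (u / t) powr (real N)" using a ut by (rule powr_mono)
  also have "\<dots> = (u / t) ^ N" using t u by (simp add: powr_realpow)
  finally have p: "(u / t) powr \<alpha> \<le> (u / t) ^ N" .
  have "X * t ^ N \<le> C0 * Y * (u / t) ^ N * t ^ N"
    using X p C0 Y t by (intro mult_right_mono order_trans[OF X(2)] mult_left_mono) auto
  also have "\<dots> = C0 * Y * u ^ N" using t by (simp add: power_divide)
  finally have 1: "X * t ^ N \<le> C0 * Y * u ^ N" .
  have dN: "(u / 2) ^ N \<le> d ^ N" using d u by (intro power_mono) auto
  have dpos: "0 < d" using d u by linarith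
  have Cm: "0 < Cm" using C0 by simp
  have "X * (t ^ N / (Y * M)) / d ^ N = (X * t ^ N) / (Y * M * d ^ N)" by simp
  also have "\<dots> \<le> (C0 * Y * u ^ N) / (Y * M * d ^ N)"
    using 1 Y M Cm dpos by (intro divide_right_mono) auto
  also have "\<dots> \<le> (C0 * Y * u ^ N) / (Y * M * (u / 2) ^ N)"
    using dN Y M Cm dpos u C0 by (intro divide_left_mono mult_left_mono mult_pos_pos) auto
  also have "\<dots> = C0 / Cm" using Y u Cm by (simp add: M power_divide field_simps)
  also have "\<dots> \<le> 1" using C0 by simp
  finally show ?thesis .
qed


lemma test_fns:
  assumes w: "weight nu" and U: "property_U nu"
  obtains c p :: real and T :: "complex \<Rightarrow> complex \<Rightarrow> complex" and Q :: "complex \<Rightarrow> real"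
  where "c > 0" "p > 0"
   "\<And>a. a \<in> ball 0 1 \<Longrightarrow> T a holomorphic_on ball 0 1"
   "\<And>a z. a \<in> ball 0 1 \<Longrightarrow> z \<in> ball 0 1 \<Longrightarrow> nu (cmod z) * cmod (T a z) \<le> 1"
   "\<And>a. a \<in> ball 0 1 \<Longrightarrow> cmod (deriv (T a) a) = c * cmod a / ((1 - (cmod a)\<^sup>2) * nu (cmod a))"
   "\<And>a z. a \<in> ball 0 1 \<Longrightarrow> z \<in> ball 0 1 \<Longrightarrow> cmod (deriv (T a) z) \<le> Q z * (1 - (cmod a)\<^sup>2) powr p"
   "\<And>a. a \<in> ball 0 1 \<Longrightarrow> \<exists>B. \<forall>z\<in>ball 0 1. cmod (T a z) \<le> B"
proof -
  obtain \<alpha> C where al: "\<alpha> > 0" and C: "C > 0" and UC: "\<forall>r\<in>{0..<1}. \<forall>s\<in>{0..<1}. r \<le> s \<longrightarrow>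
        nu r / (1 - r\<^sup>2) powr \<alpha> \<le> C * (nu s / (1 - s\<^sup>2) powr \<alpha>)"
    using U unfolding property_U_def by blast
  define N where "N = nat \<lfloor>\<alpha>\<rfloor> + 1"
  have N: "\<alpha> < real N" "\<alpha> \<le> real N" unfolding N_def using al by linarith+
  define Cm where "Cm = max C 1"
  have Cm: "0 < Cm" "C \<le> Cm" "1 \<le> Cm" by (auto simp: Cm_def)
  define M where "M = 2 ^ N * Cm"
  have Mp: "0 < M" using Cm by (simp add: M_def)
  define T where "T = tf nu N M"
  define ca where "ca a = (1 - (cmod a)\<^sup>2) ^ N / (nu (cmod a) * M)" for a
  have nu0: "0 < nu 0" using propU_pos[OF U, of 0] by simp
  have t: "0 < 1 - (cmod a)\<^sup>2" if "a \<in> ball 0 1" for a using that by (simp add: abs_square_less_1)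
  have nua: "0 < nu (cmod a)" if "a \<in> ball 0 1" for a using propU_pos[OF U, of "cmod a"] that by simp
  have cap: "0 < ca a" if "a \<in> ball 0 1" for a using t[OF that] nua[OF that] Mp by (simp add: ca_def)
  have Tz: "cmod (T a z) = ca a / cmod (1 - cnj a * z) ^ N" if "a \<in> ball 0 1" for a z
  proof -
    have Teq: "T a z = complex_of_real (ca a) / (1 - cnj a * z) ^ N" unfolding T_def tf_def ca_def by (rule refl)
    show ?thesis unfolding Teq norm_divide norm_of_real norm_power using cap[OF that] by simp
  qed
  have Td: "deriv (T a) z = complex_of_real (ca a) * of_nat N * cnj a / (1 - cnj a * z) ^ Suc N"
    if "a \<in> ball 0 1" "z \<in> ball 0 1" for a z
    using tf_deriv[of a z nu N M] that unfolding T_def ca_def by (simp add: DERIV_imp_deriv)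
  have Tdn: "cmod (deriv (T a) z) = ca a * real N * cmod a / cmod (1 - cnj a * z) ^ Suc N"
    if "a \<in> ball 0 1" "z \<in> ball 0 1" for a z
    unfolding Td[OF that] norm_divide norm_of_real norm_power norm_mult norm_of_nat complex_mod_cnj
    using cap[OF that(1)] by simp
  show ?thesis
  proof (rule that[of "real N / M" "real N - \<alpha>" T "\<lambda>z. C / (nu 0 * M) * real N / (1 - cmod z) ^ Suc N"])
    show "0 < real N / M" using N al Mp by simp
    show "0 < real N - \<alpha>" using N by simp
    show "T a holomorphic_on ball 0 1" if "a \<in> ball 0 1" for a
      using tf_deriv[of a _ nu N M] that unfolding T_def holomorphic_on_open[OF open_ball] by (auto; blast)
    show "nu (cmod z) * cmod (T a z) \<le> 1" if a: "a \<in> ball 0 1" and z: "z \<in> ball 0 1" for a z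
    proof -
      have am: "cmod a < 1" and zm: "cmod z < 1" using a z by auto
      note di = disc_ineqs[OF am zm]
      define d where "d = 1 - cmod a * cmod z"
      have "nu (cmod z) * cmod (T a z) \<le> nu (cmod z) * (ca a / d ^ N)"
      proof -
        have "ca a / cmod (1 - cnj a * z) ^ N \<le> ca a / d ^ N"
          using di cap[OF a] by (auto simp: d_def intro!: divide_left_mono power_mono mult_pos_pos zero_less_power)
        thus ?thesis unfolding Tz[OF a] using w z by (intro mult_left_mono) (auto simp: weight_def)
      qed
      also have "\<dots> \<le> 1"
      proof (cases "cmod z \<le> cmod a")
        case True
        have "nu (cmod z) / (1 - (cmod z)\<^sup>2) powr \<alpha> \<le> C * (nu (cmod a) / (1 - (cmod a)\<^sup>2) powr \<alpha>)"
          using UC True am zm by auto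
        hence X: "nu (cmod z) \<le> C * nu (cmod a) * ((1 - (cmod z)\<^sup>2) / (1 - (cmod a)\<^sup>2)) powr \<alpha>"
          using t[OF a] t[OF z] by (simp add: powr_divide field_simps)
        have "nu (cmod z) * ((1 - (cmod a)\<^sup>2) ^ N / (nu (cmod a) * M)) / d ^ N \<le> 1"
          by (rule key_bound[OF t[OF a] _ _ _ X nua[OF a] N(2) C Cm(2) M_def])
             (use True di w zm in \<open>auto simp: d_def weight_def power_mono\<close>)
        thus ?thesis by (simp add: ca_def)
      next
        case False
        have X: "nu (cmod z) \<le> 1 * nu (cmod a) * ((1 - (cmod a)\<^sup>2) / (1 - (cmod a)\<^sup>2)) powr \<alpha>"
          using weightD(1)[OF w, of "cmod a" "cmod z"] False t[OF a] zm by auto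
        have "nu (cmod z) * ((1 - (cmod a)\<^sup>2) ^ N / (nu (cmod a) * M)) / d ^ N \<le> 1"
          by (rule key_bound[OF t[OF a] _ _ _ X nua[OF a] N(2) _ Cm(3) M_def])
             (use di w zm in \<open>auto simp: d_def weight_def\<close>)
        thus ?thesis by (simp add: ca_def)
      qed
      finally show ?thesis .
    qed
    show "cmod (deriv (T a) a) = real N / M * cmod a / ((1 - (cmod a)\<^sup>2) * nu (cmod a))"
      if a: "a \<in> ball 0 1" for a
    proof -
      have e: "1 - cnj a * a = complex_of_real (1 - (cmod a)\<^sup>2)"
        using complex_norm_square[of a] by (simp add: mult.commute)
      have nn: "cmod (1 - cnj a * a) = 1 - (cmod a)\<^sup>2" unfolding e norm_of_real using t[OF a] by (simp only: abs_of_pos)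
      show ?thesis unfolding Tdn[OF a a] nn using t[OF a] nua[OF a] Mp
        by (simp add: ca_def field_simps)
    qed
    show "cmod (deriv (T a) z) \<le> C / (nu 0 * M) * real N / (1 - cmod z) ^ Suc N * (1 - (cmod a)\<^sup>2) powr (real N - \<alpha>)"
      if a: "a \<in> ball 0 1" and z: "z \<in> ball 0 1" for a z
    proof -
      have am: "cmod a < 1" and zm: "cmod z < 1" using a z by auto
      note di = disc_ineqs[OF am zm]
      define tt where "tt = 1 - (cmod a)\<^sup>2"
      have tt: "0 < tt" using t[OF a] by (simp add: tt_def)
      have "nu 0 / (1 - 0\<^sup>2) powr \<alpha> \<le> C * (nu (cmod a) / (1 - (cmod a)\<^sup>2) powr \<alpha>)"
        using UC[rule_format, of 0 "cmod a"] am by simp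
      hence lo: "nu 0 * tt powr \<alpha> \<le> C * nu (cmod a)" using tt by (simp add: tt_def field_simps)
      have "ca a = tt powr real N / (nu (cmod a) * M)" using tt by (simp add: ca_def tt_def powr_realpow)
      also have "\<dots> \<le> tt powr real N / (nu 0 * tt powr \<alpha> / C * M)"
        using lo nu0 tt C Mp nua[OF a] by (intro divide_left_mono mult_right_mono mult_pos_pos divide_pos_pos) (auto simp: field_simps)
      also have "\<dots> = C / (nu 0 * M) * tt powr (real N - \<alpha>)"
        using tt C nu0 Mp by (simp add: powr_diff field_simps)
      finally have ca_le: "ca a \<le> C / (nu 0 * M) * tt powr (real N - \<alpha>)" .
      have z1: "0 < 1 - cmod z" using zm by simp
      have "cmod (deriv (T a) z) = ca a * real N * cmod a / cmod (1 - cnj a * z) ^ Suc N" by (rule Tdn[OF a z])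
      also have "\<dots> \<le> ca a * real N * 1 / (1 - cmod z) ^ Suc N"
        using di cap[OF a] am z1
        by (intro frac_le mult_left_mono power_mono mult_nonneg_nonneg zero_less_power) auto
      also have "\<dots> \<le> C / (nu 0 * M) * tt powr (real N - \<alpha>) * real N / (1 - cmod z) ^ Suc N"
      proof -
        have "ca a * real N \<le> C / (nu 0 * M) * tt powr (real N - \<alpha>) * real N"
          using ca_le by (intro mult_right_mono) auto
        thus ?thesis unfolding mult_1_right by (rule divide_right_mono) (use z1 in simp)
      qed
      finally show ?thesis by (simp add: tt_def mult_ac)
    qed
    show "\<exists>B. \<forall>z\<in>ball 0 1. cmod (T a z) \<le> B" if a: "a \<in> ball 0 1" for a
    proof (intro exI ballI)
      fix z assume z: "z \<in> ball (0::complex) 1"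
      have am: "cmod a < 1" and zm: "cmod z < 1" using a z by auto
      note di = disc_ineqs[OF am zm]
      have "(1 - (cmod a)\<^sup>2) / 2 \<le> cmod (1 - cnj a * z)" using di by linarith
      hence "((1 - (cmod a)\<^sup>2) / 2) ^ N \<le> cmod (1 - cnj a * z) ^ N" using t[OF a] by (intro power_mono) auto
      thus "cmod (T a z) \<le> ca a / ((1 - (cmod a)\<^sup>2) / 2) ^ N" unfolding Tz[OF a]
        using cap[OF a] t[OF a] di(6) by (intro divide_left_mono mult_pos_pos zero_less_power) auto
    qed
  qed
qed


lemma to_zero_bdd:
  assumes w: "weight w" and F: "F holomorphic_on ball 0 1"
    and Z: "to_zero_at_boundary (\<lambda>z. w (cmod z) * cmod (F z))"
  obtains B where "\<And>z. z \<in> ball 0 1 \<Longrightarrow> w (cmod z) * cmod (F z) \<le> B"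
proof -
  obtain r0 where r0: "r0 < 1" "\<And>z. r0 < cmod z \<and> cmod z < 1 \<Longrightarrow> \<bar>w (cmod z) * cmod (F z)\<bar> < 1"
    using Z unfolding to_zero_at_boundary_def by (meson zero_less_one)
  define r1 where "r1 = max r0 0"
  have r1: "0 \<le> r1" "r1 < 1" using r0 by (auto simp: r1_def)
  obtain G where G: "\<And>z. cmod z \<le> r1 \<Longrightarrow> cmod (F z) \<le> G" using bound_on_cball[OF F r1(2)] by blast
  have "w (cmod z) * cmod (F z) \<le> max 1 (w 0 * G)" if z: "z \<in> ball 0 1" for z
  proof (cases "r1 < cmod z")
    case True
    then show ?thesis using r0(2)[of z] z by (auto simp: r1_def)
  next
    case False
    have m: "0 \<le> w (cmod z)" "w (cmod z) \<le> w 0" using weightD[OF w, of 0 "cmod z"] z by auto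
    have "w (cmod z) * cmod (F z) \<le> w 0 * G" using m G[of z] False by (intro mult_mono) auto
    thus ?thesis by simp
  qed
  thus ?thesis using that by blast
qed

lemma H0_sub:
  assumes w: "weight nu" and f: "f \<in> H0 nu" shows "f \<in> Hinf nu"
proof -
  have fh: "f holomorphic_on ball 0 1" and Z: "to_zero_at_boundary (\<lambda>z. nu (cmod z) * cmod (f z))"
    using f unfolding H0_def by auto
  obtain B where "\<And>z. z \<in> ball 0 1 \<Longrightarrow> nu (cmod z) * cmod (f z) \<le> B" using to_zero_bdd[OF w fh Z] by blast
  thus ?thesis unfolding Hinf_def using fh by (auto intro!: bdd_aboveI[where M=B])
qed

lemma B0_sub:
  assumes w: "weight mu" and h: "h \<in> B0 mu" shows "h \<in> Binf mu"
proof -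
  have hh: "h holomorphic_on ball 0 1" and Z: "to_zero_at_boundary (\<lambda>z. mu (cmod z) * cmod (deriv h z))"
    using h unfolding B0_def by auto
  have dh: "deriv h holomorphic_on ball 0 1" using hh by (intro holomorphic_deriv) auto
  obtain B where "\<And>z. z \<in> ball 0 1 \<Longrightarrow> mu (cmod z) * cmod (deriv h z) \<le> B" using to_zero_bdd[OF w dh Z] by blast
  thus ?thesis unfolding Binf_def using hh by (auto intro!: bdd_aboveI[where M=B])
qed

lemma Hinf_bound:
  assumes "f \<in> Hinf nu" "z \<in> ball 0 1"
  shows "nu (cmod z) * cmod (f z) \<le> Hnorm nu f"
  using assms unfolding Hinf_def Hnorm_def by (auto intro: cSUP_upper)

lemma Hnorm_le1:
  assumes "\<forall>z\<in>ball 0 1. nu (cmod z) * cmod (f z) \<le> 1"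
  shows "Hnorm nu f \<le> 1"
  unfolding Hnorm_def using assms by (intro cSUP_least) auto

lemma Binf_bound:
  assumes "h \<in> Binf mu"
  obtains B where "\<And>z. z \<in> ball 0 1 \<Longrightarrow> mu (cmod z) * cmod (deriv h z) \<le> B"
proof -
  obtain M where "\<forall>x\<in>ball 0 1. mu (cmod x) * cmod (deriv h x) \<le> M"
    using assms unfolding Binf_def bdd_above_def by auto
  thus ?thesis using that by blast
qed


lemma necessity:
  assumes w: "weight nu" and U: "property_U nu" and mu: "weight mu" and g: "g holomorphic_on ball 0 1"
    and cop: "compact_op (Sg g) X (Hnorm nu) Y (Bnorm mu) fsub"
    and TX: "\<And>f. f holomorphic_on ball 0 1 \<Longrightarrow> (\<forall>z\<in>ball 0 1. nu (cmod z) * cmod (f z) \<le> 1)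
               \<Longrightarrow> (\<exists>B. \<forall>z\<in>ball 0 1. cmod (f z) \<le> B) \<Longrightarrow> f \<in> X"
    and YB: "Y \<subseteq> Binf mu"
  shows "to_zero_at_boundary (ratio nu mu g)"
proof (rule ccontr)
  assume nZ: "\<not> to_zero_at_boundary (ratio nu mu g)"
  obtain c p T Q where c: "c > 0" and p: "p > 0"
   and Th: "\<And>a. a \<in> ball 0 1 \<Longrightarrow> T a holomorphic_on ball 0 1"
   and Tb: "\<And>a z. a \<in> ball 0 1 \<Longrightarrow> z \<in> ball 0 1 \<Longrightarrow> nu (cmod z) * cmod (T a z) \<le> 1"
   and Ta: "\<And>a. a \<in> ball 0 1 \<Longrightarrow> cmod (deriv (T a) a) = c * cmod a / ((1 - (cmod a)\<^sup>2) * nu (cmod a))"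
   and Tq: "\<And>a z. a \<in> ball 0 1 \<Longrightarrow> z \<in> ball 0 1 \<Longrightarrow> cmod (deriv (T a) z) \<le> Q z * (1 - (cmod a)\<^sup>2) powr p"
   and TB: "\<And>a. a \<in> ball 0 1 \<Longrightarrow> \<exists>B. \<forall>z\<in>ball 0 1. cmod (T a z) \<le> B"
    by (rule test_fns[OF w U]) blast
  obtain \<epsilon> where e: "\<epsilon> > 0" and ee: "\<forall>r<1. \<exists>z. r < cmod z \<and> cmod z < 1 \<and> \<not> \<bar>ratio nu mu g z\<bar> < \<epsilon>"
    using nZ unfolding to_zero_at_boundary_def by blast
  have "\<forall>n. \<exists>z. 1 - inverse (real (Suc n)) < cmod z \<and> cmod z < 1 \<and> \<epsilon> \<le> ratio nu mu g z"
  proof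
    fix n
    obtain z where z: "1 - inverse (real (Suc n)) < cmod z" "cmod z < 1" "\<not> \<bar>ratio nu mu g z\<bar> < \<epsilon>"
      using ee[rule_format, of "1 - inverse (real (Suc n))"] by auto
    have "0 \<le> ratio nu mu g z" using ratio_nonneg[OF mu U, of z] z by simp
    thus "\<exists>z. 1 - inverse (real (Suc n)) < cmod z \<and> cmod z < 1 \<and> \<epsilon> \<le> ratio nu mu g z"
      using z by auto
  qed
  then obtain a where a1: "\<And>n. 1 - inverse (real (Suc n)) < cmod (a n)" and a2: "\<And>n. cmod (a n) < 1"
    and a3: "\<And>n. \<epsilon> \<le> ratio nu mu g (a n)" by metis
  have ab: "a n \<in> ball 0 1" for n using a2 by simp
  have fsX: "\<forall>n. T (a n) \<in> X \<and> Hnorm nu (T (a n)) \<le> 1"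
  proof
    fix n
    have b1: "\<forall>z\<in>ball 0 1. nu (cmod z) * cmod (T (a n) z) \<le> 1" using Tb[OF ab] by blast
    show "T (a n) \<in> X \<and> Hnorm nu (T (a n)) \<le> 1"
      using TX[OF Th[OF ab] b1 TB[OF ab]] Hnorm_le1[OF b1] by blast
  qed
  have cd: "(\<forall>f\<in>X. Sg g f \<in> Y) \<and> (\<forall>fs :: nat \<Rightarrow> complex \<Rightarrow> complex. (\<forall>n. fs n \<in> X \<and> Hnorm nu (fs n) \<le> 1) \<longrightarrow>
        (\<exists>r h. strict_mono r \<and> h \<in> Y \<and> (\<lambda>n. Bnorm mu (fsub (Sg g (fs (r n))) h)) \<longlonglongrightarrow> 0))"
    using cop by (simp only: compact_op_def)
  have cop1: "\<forall>f\<in>X. Sg g f \<in> Y" using cd by (rule conjunct1)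
  have "\<exists>r h. strict_mono r \<and> h \<in> Y \<and> (\<lambda>n. Bnorm mu (fsub (Sg g (T (a (r n)))) h)) \<longlonglongrightarrow> 0"
    using cd[THEN conjunct2, rule_format, of "\<lambda>n. T (a n)"] fsX by (simp only:)
  then obtain rr h where rr: "strict_mono rr" and hY: "h \<in> Y"
    and El: "(\<lambda>n. Bnorm mu (fsub (Sg g (T (a (rr n)))) h)) \<longlonglongrightarrow> 0"
    by (elim exE conjE)
  define b where "b n = a (rr n)" for n
  define E where "E n = Bnorm mu (fsub (Sg g (T (b n))) h)" for n
  have Eeq: "E = (\<lambda>n. Bnorm mu (fsub (Sg g (T (a (rr n)))) h))" by (rule ext) (simp only: E_def b_def)
  have El: "E \<longlonglongrightarrow> 0" using El unfolding Eeq .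
  have bb: "b n \<in> ball 0 1" for n using ab[of "rr n"] by (simp add: b_def)
  have hB: "h \<in> Binf mu" using hY YB by blast
  have hh: "h holomorphic_on ball 0 1" using hB unfolding Binf_def by blast
  obtain Bh where Bh: "\<And>z. z \<in> ball 0 1 \<Longrightarrow> mu (cmod z) * cmod (deriv h z) \<le> Bh"
    using Binf_bound[OF hB] by blast
  have mu0: "0 \<le> mu (cmod z)" if "z \<in> ball 0 1" for z using weightD[OF mu, of 0 "cmod z"] that by auto
  have dfs: "deriv (fsub (Sg g (T (b n))) h) z = deriv (T (b n)) z * g z - deriv h z"
    if z: "z \<in> ball 0 1" for n z
  proof -
    have "deriv (fsub (Sg g (T (b n))) h) z = deriv (Sg g (T (b n))) z - deriv h z"
      unfolding fsub_def using Sg_deriv[OF Th[OF bb] g z] holomorphic_on_imp_differentiable_at[OF hh _ z]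
      by (intro deriv_diff) (auto simp: field_differentiable_def)
    thus ?thesis using Sg_hol(2)[OF Th[OF bb] g z] by simp
  qed
  have Ele: "mu (cmod z) * cmod (deriv (T (b n)) z * g z - deriv h z) \<le> E n" if z: "z \<in> ball 0 1" for n z
  proof -
    have AY: "Sg g (T (b n)) \<in> Binf mu" using cop1 fsX YB unfolding b_def by blast
    obtain BA where BA: "\<And>z. z \<in> ball 0 1 \<Longrightarrow> mu (cmod z) * cmod (deriv (Sg g (T (b n))) z) \<le> BA"
      using Binf_bound[OF AY] by blast
    have "mu (cmod w) * cmod (deriv (fsub (Sg g (T (b n))) h) w) \<le> BA + Bh" if w': "w \<in> ball 0 1" for w
    proof -
      have "mu (cmod w) * cmod (deriv (fsub (Sg g (T (b n))) h) w)
          \<le> mu (cmod w) * (cmod (deriv (Sg g (T (b n))) w) + cmod (deriv h w))"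
        unfolding dfs[OF w'] Sg_hol(2)[OF Th[OF bb] g w', symmetric]
        using mu0[OF w'] by (intro mult_left_mono norm_triangle_ineq4) auto
      also have "\<dots> \<le> BA + Bh" using BA[OF w'] Bh[OF w'] by (simp add: distrib_left)
      finally show ?thesis .
    qed
    hence bdd: "bdd_above ((\<lambda>w. mu (cmod w) * cmod (deriv (fsub (Sg g (T (b n))) h) w)) ` ball 0 1)"
      by (intro bdd_aboveI[where M="BA + Bh"]) auto
    have "mu (cmod z) * cmod (deriv (T (b n)) z * g z - deriv h z)
        = mu (cmod z) * cmod (deriv (fsub (Sg g (T (b n))) h) z)" using dfs[OF z] by simp
    also have "\<dots> \<le> (SUP w\<in>ball 0 1. mu (cmod w) * cmod (deriv (fsub (Sg g (T (b n))) h) w))"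
      by (rule cSUP_upper[OF z bdd])
    also have "\<dots> \<le> E n" unfolding E_def Bnorm_def by simp
    finally show ?thesis .
  qed
  have rrn: "n \<le> rr n" for n using rr by (simp add: seq_suble)
  have b1: "1 - inverse (real (Suc n)) < cmod (b n)" for n
  proof -
    have "inverse (real (Suc (rr n))) \<le> inverse (real (Suc n))" using rrn[of n] by (simp add: field_simps)
    thus ?thesis using a1[of "rr n"] unfolding b_def by linarith
  qed
  have tlim: "(\<lambda>n. 1 - (cmod (b n))\<^sup>2) \<longlonglongrightarrow> 0"
  proof (rule Lim_null_comparison)
    have "(\<lambda>n. 2 * inverse (real (Suc n))) \<longlonglongrightarrow> 2 * 0"
      by (intro tendsto_intros LIMSEQ_inverse_real_of_nat)
    thus "(\<lambda>n. 2 * inverse (real (Suc n))) \<longlonglongrightarrow> 0" by simp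
    show "\<forall>\<^sub>F n in sequentially. norm (1 - (cmod (b n))\<^sup>2) \<le> 2 * inverse (real (Suc n))"
    proof (intro always_eventually allI)
      fix n
      have bn: "cmod (b n) < 1" using bb[of n] by simp
      have "0 \<le> 1 - (cmod (b n))\<^sup>2" using bn by (simp add: abs_square_le_1)
      moreover have "1 - (cmod (b n))\<^sup>2 = (1 - cmod (b n)) * (1 + cmod (b n))" by (simp add: power2_eq_square algebra_simps)
      moreover have "(1 - cmod (b n)) * (1 + cmod (b n)) \<le> inverse (real (Suc n)) * 2"
        using b1[of n] bn by (intro mult_mono) auto
      ultimately show "norm (1 - (cmod (b n))\<^sup>2) \<le> 2 * inverse (real (Suc n))" by simp
    qed
  qed
  have h0: "mu (cmod z) * cmod (deriv h z) = 0" if z: "z \<in> ball 0 1" for z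
  proof -
    have "(\<lambda>n. (1 - (cmod (b n))\<^sup>2) powr p) \<longlonglongrightarrow> 0"
      by (rule tendsto_zero_powrI[OF tlim tendsto_const _ p])
         (use bb in \<open>auto intro!: always_eventually simp: abs_square_le_1 less_imp_le\<close>)
    hence "(\<lambda>n. Q z * (1 - (cmod (b n))\<^sup>2) powr p) \<longlonglongrightarrow> 0" by (simp add: tendsto_mult_right_zero)
    hence d0: "(\<lambda>n. deriv (T (b n)) z) \<longlonglongrightarrow> 0"
      by (rule Lim_null_comparison[rotated]) (use Tq[OF bb z] in auto)
    have "(\<lambda>n. mu (cmod z) * cmod (deriv (T (b n)) z * g z - deriv h z)) \<longlonglongrightarrow> mu (cmod z) * cmod (0 * g z - deriv h z)"
      by (intro tendsto_intros d0)
    hence sl: "(\<lambda>n. mu (cmod z) * cmod (deriv (T (b n)) z * g z - deriv h z)) \<longlonglongrightarrow> mu (cmod z) * cmod (deriv h z)"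
      by simp
    have "mu (cmod z) * cmod (deriv h z) \<le> 0"
      by (rule tendsto_le[OF sequentially_bot El sl]) (use Ele[OF z] in auto)
    moreover have "0 \<le> mu (cmod z) * cmod (deriv h z)" using mu0[OF z] by simp
    ultimately show ?thesis by linarith
  qed
  have low: "c * \<epsilon> / 2 \<le> E n" if n: "n \<ge> 1" for n
  proof -
    have bn: "cmod (b n) < 1" using bb[of n] by simp
    have half: "1 / 2 \<le> cmod (b n)"
    proof -
      have "inverse (real (Suc n)) \<le> 1 / 2" using n by (simp add: field_simps)
      thus ?thesis using b1[of n] by simp
    qed
    have rb: "\<epsilon> \<le> ratio nu mu g (b n)" using a3 by (simp add: b_def)
    have "mu (cmod (b n)) * cmod (deriv (T (b n)) (b n) * g (b n))
        \<le> mu (cmod (b n)) * cmod (deriv (T (b n)) (b n) * g (b n) - deriv h (b n)) + mu (cmod (b n)) * cmod (deriv h (b n))"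
    proof -
      have "cmod (deriv (T (b n)) (b n) * g (b n)) \<le> cmod (deriv (T (b n)) (b n) * g (b n) - deriv h (b n)) + cmod (deriv h (b n))"
        by (metis add.commute norm_triangle_sub)
      from mult_left_mono[OF this mu0[OF bb]] show ?thesis by (simp only: distrib_left)
    qed
    also have "\<dots> \<le> E n" using Ele[OF bb, of n n] h0[OF bb, of n] by linarith
    finally have 1: "mu (cmod (b n)) * cmod (deriv (T (b n)) (b n) * g (b n)) \<le> E n" .
    have "mu (cmod (b n)) * cmod (deriv (T (b n)) (b n) * g (b n)) = c * cmod (b n) * ratio nu mu g (b n)"
      unfolding norm_mult Ta[OF bb] ratio_def by simp
    also have "\<dots> \<ge> c * (1/2) * \<epsilon>" using c half rb e by (intro mult_mono) auto
    finally show ?thesis using 1 by simp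
  qed
  have pos: "0 < c * \<epsilon> / 2" using c e by simp
  have "\<forall>\<^sub>F n in sequentially. E n < c * \<epsilon> / 2" by (rule order_tendstoD(2)[OF El pos])
  moreover have "\<forall>\<^sub>F n in sequentially. c * \<epsilon> / 2 \<le> E n"
    by (rule eventually_sequentiallyI[of 1]) (rule low)
  ultimately have "\<forall>\<^sub>F n in sequentially. False" by eventually_elim simp
  thus False by simp
qed


lemma Hinf_boundE:
  assumes "f \<in> Hinf nu"
  obtains B where "\<forall>z\<in>ball 0 1. nu (cmod z) * cmod (f z) \<le> B"
proof -
  obtain M where "\<forall>x\<in>ball 0 1. nu (cmod x) * cmod (f x) \<le> M"
    using assms unfolding Hinf_def bdd_above_def by auto
  thus ?thesis using that by blast
qed

lemma suff:
  assumes w: "weight nu" and U: "property_U nu" and mu: "weight mu" and g: "g holomorphic_on ball 0 1"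
    and Z: "to_zero_at_boundary (ratio nu mu g)"
    and XH: "X \<subseteq> Hinf nu"
    and SY: "\<And>f B. f holomorphic_on ball 0 1 \<Longrightarrow> (\<forall>w\<in>ball 0 1. nu (cmod w) * cmod (f w) \<le> B) \<Longrightarrow> Sg g f \<in> Y"
  shows "compact_op (Sg g) X (Hnorm nu) Y (Bnorm mu) fsub"
  unfolding compact_op_def
proof (intro conjI ballI allI impI)
  fix f assume "f \<in> X"
  hence fH: "f \<in> Hinf nu" using XH by blast
  then obtain B where "\<forall>z\<in>ball 0 1. nu (cmod z) * cmod (f z) \<le> B" by (rule Hinf_boundE)
  moreover have "f holomorphic_on ball 0 1" using fH unfolding Hinf_def by blast
  ultimately show "Sg g f \<in> Y" using SY by blast
next
  fix fs :: "nat \<Rightarrow> complex \<Rightarrow> complex"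
  assume fs: "\<forall>n. fs n \<in> X \<and> Hnorm nu (fs n) \<le> 1"
  have fH: "fs n \<in> Hinf nu" for n using fs XH by blast
  have fsh: "fs n holomorphic_on ball 0 1" for n using fH[of n] unfolding Hinf_def by blast
  have fsb: "\<forall>z\<in>ball 0 1. nu (cmod z) * cmod (fs n z) \<le> 1" for n
    using Hinf_bound[OF fH[of n]] fs by (meson order_trans)
  obtain r f where r: "strict_mono r" and fh: "f holomorphic_on ball 0 1"
    and fb: "\<forall>z\<in>ball 0 1. nu (cmod z) * cmod (f z) \<le> 1"
    and lim: "(\<lambda>n. Bnorm mu (fsub (Sg g (fs (r n))) (Sg g f))) \<longlonglongrightarrow> 0"
    by (rule compact_seq[OF w U mu g Z fsh fsb])
  have "Sg g f \<in> Y" using SY[OF fh fb] .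
  thus "\<exists>r h. strict_mono r \<and> h \<in> Y \<and> (\<lambda>n. Bnorm mu (fsub (Sg g (fs (r n))) h)) \<longlonglongrightarrow> 0"
    using r lim by blast
qed

lemma typical_H0:
  assumes w: "weight nu" and t: "typical_weight nu" and fh: "f holomorphic_on ball 0 1"
    and fB: "\<exists>B. \<forall>z\<in>ball 0 1. cmod (f z) \<le> B"
  shows "f \<in> H0 nu"
proof -
  obtain B where B: "\<forall>z\<in>ball 0 1. cmod (f z) \<le> B" using fB by blast
  have B0: "0 \<le> B" using B[rule_format, of 0] by (meson centre_in_ball norm_ge_zero order_trans zero_less_one)
  have "to_zero_at_boundary (\<lambda>z. nu (cmod z) * cmod (f z))"
    unfolding to_zero_at_boundary_def
  proof (intro allI impI)
    fix e :: real assume e: "e > 0"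
    have "\<forall>\<^sub>F s in at_left 1. nu s < e / (B + 1)"
      using order_tendstoD(2)[OF t[unfolded typical_weight_def]] e B0 by simp
    then obtain a where a: "a < 1" "\<forall>s>a. s < 1 \<longrightarrow> nu s < e / (B + 1)"
      unfolding eventually_at_left_field by blast
    show "\<exists>r<1. \<forall>z. r < cmod z \<and> cmod z < 1 \<longrightarrow> \<bar>nu (cmod z) * cmod (f z)\<bar> < e"
    proof (intro exI[of _ a] conjI allI impI a(1))
      fix z :: complex assume z: "a < cmod z \<and> cmod z < 1"
      have nz: "0 \<le> nu (cmod z)" using weightD[OF w, of 0 "cmod z"] z by auto
      have ns: "nu (cmod z) < e / (B + 1)" using a(2) z by blast
      have "nu (cmod z) * cmod (f z) \<le> nu (cmod z) * (B + 1)"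
      proof -
        have "cmod (f z) \<le> B" using B z by simp
        thus ?thesis using nz by (intro mult_left_mono) auto
      qed
      also have "\<dots> < e / (B + 1) * (B + 1)" using ns B0 by (intro mult_strict_right_mono) auto
      also have "\<dots> = e" using B0 by simp
      finally show "\<bar>nu (cmod z) * cmod (f z)\<bar> < e" using nz by simp
    qed
  qed
  thus ?thesis unfolding H0_def using fh by blast
qed

theorem theorem11:
  fixes g :: "complex \<Rightarrow> complex" and \<nu> \<mu> :: "real \<Rightarrow> real"
  assumes "g holomorphic_on ball 0 1"
    and "weight \<nu>" and "property_U \<nu>" and "weight \<mu>"
  shows "(compact_op (Sg g) (Hinf \<nu>) (Hnorm \<nu>) (Binf \<mu>) (Bnorm \<mu>) fsub
            \<longleftrightarrow> to_zero_at_boundary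
                  (\<lambda>z. \<mu> (cmod z) / ((1 - (cmod z)\<^sup>2) * \<nu> (cmod z)) * cmod (g z)))
       \<and> (typical_weight \<nu> \<and> typical_weight \<mu> \<longrightarrow>
            (compact_op (Sg g) (H0 \<nu>) (Hnorm \<nu>) (B0 \<mu>) (Bnorm \<mu>) fsub
             \<longleftrightarrow> to_zero_at_boundary
                  (\<lambda>z. \<mu> (cmod z) / ((1 - (cmod z)\<^sup>2) * \<nu> (cmod z)) * cmod (g z))))"
proof -
  note g = assms(1) and w = assms(2) and U = assms(3) and mu = assms(4)
  have req: "(\<lambda>z. \<mu> (cmod z) / ((1 - (cmod z)\<^sup>2) * \<nu> (cmod z)) * cmod (g z)) = ratio \<nu> \<mu> g"
    by (rule ext) (simp only: ratio_def)
  have A: "compact_op (Sg g) (Hinf \<nu>) (Hnorm \<nu>) (Binf \<mu>) (Bnorm \<mu>) fsub \<longleftrightarrow> to_zero_at_boundary (ratio \<nu> \<mu> g)"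
  proof
    assume c: "compact_op (Sg g) (Hinf \<nu>) (Hnorm \<nu>) (Binf \<mu>) (Bnorm \<mu>) fsub"
    show "to_zero_at_boundary (ratio \<nu> \<mu> g)"
    proof (rule necessity[OF w U mu g c])
      fix f assume "f holomorphic_on ball 0 1" "\<forall>z\<in>ball 0 1. \<nu> (cmod z) * cmod (f z) \<le> 1"
      thus "f \<in> Hinf \<nu>" unfolding Hinf_def by (auto intro!: bdd_aboveI[where M=1])
    qed simp
  next
    assume Z: "to_zero_at_boundary (ratio \<nu> \<mu> g)"
    show "compact_op (Sg g) (Hinf \<nu>) (Hnorm \<nu>) (Binf \<mu>) (Bnorm \<mu>) fsub"
      by (rule suff[OF w U mu g Z]) (use Sg_in(1)[OF w U mu g Z] in auto)
  qed
  have B: "compact_op (Sg g) (H0 \<nu>) (Hnorm \<nu>) (B0 \<mu>) (Bnorm \<mu>) fsub \<longleftrightarrow> to_zero_at_boundary (ratio \<nu> \<mu> g)"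
    if t: "typical_weight \<nu>"
  proof
    assume c: "compact_op (Sg g) (H0 \<nu>) (Hnorm \<nu>) (B0 \<mu>) (Bnorm \<mu>) fsub"
    show "to_zero_at_boundary (ratio \<nu> \<mu> g)"
    proof (rule necessity[OF w U mu g c])
      fix f assume "f holomorphic_on ball 0 1" "\<exists>B. \<forall>z\<in>ball 0 1. cmod (f z) \<le> B"
      thus "f \<in> H0 \<nu>" by (rule typical_H0[OF w t])
    next
      show "B0 \<mu> \<subseteq> Binf \<mu>" using B0_sub[OF mu] by blast
    qed
  next
    assume Z: "to_zero_at_boundary (ratio \<nu> \<mu> g)"
    show "compact_op (Sg g) (H0 \<nu>) (Hnorm \<nu>) (B0 \<mu>) (Bnorm \<mu>) fsub"
      by (rule suff[OF w U mu g Z]) (use Sg_in(2)[OF w U mu g Z] H0_sub[OF w] in auto)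
  qed
  show ?thesis unfolding req using A B by blast
qed


end
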